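(* Let $\nu>0$, $\Delta t>0$, $\delta\in(0,1)$, and let $k$ be a time level at which the time step bound $$\Delta t\le\frac{\delta}{2\nu}\Big[\max_{i=1,\dots,N}\sum_{j\ne i}V_j\frac{|\dot w_h(|x^k_i-x^k_j|)|}{|x^k_i-x^k_j|}\Big]^{-1}$$ holds. Then for every $\Lambda\subset I_N$ and every $\phi\in V^k(\Lambda)^d$, $$\|\Delta_h\phi\|_{2,\Lambda}^2\le\frac{2\delta}{\Delta t\,\nu}\,|\phi|_{1,k,\Lambda}^2,$$ where $(\Delta_h\phi)_i=2\sum_{j\in\Lambda\setminus\{i\}}V_j\frac{\phi_i-\phi_j}{|x^k_i-x^k_j|}\frac{x^k_i-x^k_j}{|x^k_i-x^k_j|}\cdot\nabla w_h(|x^k_i-x^k_j|)$ for $i\in\Lambda$.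
   Context: Let $d\in\{2,3\}$. Reference weight function $w\in C^2([0,\infty))$ with some $r_0>0$: $w>0$ on $(0,r_0)$, $w=0$ on $[r_0,\infty)$, $\dot w<0$ on $(0,r_0)$, $\dot w(0)=0$, $\dot w=0$ on $[r_0,\infty)$, $\int_{\mathbb{R}^d}w(|x|)dx=1$. For $h>0$, $w_h(r)=h^{-d}w(r/h)$ with derivative $\dot w_h$; for $x\ne y$, $\nabla w_h(|x-y|)=\dot w_h(|x-y|)\frac{x-y}{|x-y|}$. $N\in\mathbb{N}$, $I_N=\{1,\dots,N\}$, particle volumes $V_1,\dots,V_N>0$, pairwise distinct particle positions $x^k_1,\dots,x^k_N\in\mathbb{R}^d$. $V^k(\Lambda)^m$ is the space of $\mathbb{R}^m$-valued functions on $\{x^k_i\}_{i\in\Lambda}$ (values $\phi_i$). Discrete $L^2$ norm $\|\phi\|_{2,\Lambda}=(\sum_{i\in\Lambda}V_i|\phi_i|^2)^{1/2}$; discrete semi-norm $|\phi|_{1,k,\Lambda}=\big(\sum_{i\in\Lambda}V_i\sum_{j\in\Lambda\setminus\{i\}}V_j\frac{|\phi_i-\phi_j|^2}{|x^k_i-x^k_j|}|\dot w_h(|x^k_i-x^k_j|)|\big)^{1/2}$. *)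

theory Defs
  imports "HOL-Analysis.Analysis"
begin

text \<open>Scaled kernel derivative: w_h(r) = h^(-d) w(r/h), hence
  dw_h(r) = h^(-d-1) dw(r/h), where dw is the derivative of w.\<close>
definition wh_deriv :: "nat \<Rightarrow> (real \<Rightarrow> real) \<Rightarrow> real \<Rightarrow> real \<Rightarrow> real" where
  "wh_deriv d dw h r = dw (r / h) / h ^ (d + 1)"

definition grad_wh :: "nat \<Rightarrow> (real \<Rightarrow> real) \<Rightarrow> real \<Rightarrow> real^'n \<Rightarrow> real^'n \<Rightarrow> real^'n" where
  "grad_wh d dw h x y = (wh_deriv d dw h (norm (x - y)) / norm (x - y)) *\<^sub>R (x - y)"

definition disc_L2_sq :: "(nat \<Rightarrow> real) \<Rightarrow> nat set \<Rightarrow> (nat \<Rightarrow> real^'n) \<Rightarrow> real" where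
  "disc_L2_sq V \<Lambda> \<phi> = (\<Sum>i\<in>\<Lambda>. V i * (norm (\<phi> i))\<^sup>2)"

definition disc_H1_sq :: "nat \<Rightarrow> (real \<Rightarrow> real) \<Rightarrow> real \<Rightarrow> (nat \<Rightarrow> real) \<Rightarrow> (nat \<Rightarrow> real^'n)
    \<Rightarrow> nat set \<Rightarrow> (nat \<Rightarrow> real^'n) \<Rightarrow> real" where
  "disc_H1_sq d dw h V x \<Lambda> \<phi> =
     (\<Sum>i\<in>\<Lambda>. V i * (\<Sum>j\<in>\<Lambda> - {i}. V j * (norm (\<phi> i - \<phi> j))\<^sup>2 / norm (x i - x j)
        * \<bar>wh_deriv d dw h (norm (x i - x j))\<bar>))"

definition disc_lap :: "nat \<Rightarrow> (real \<Rightarrow> real) \<Rightarrow> real \<Rightarrow> (nat \<Rightarrow> real) \<Rightarrow> (nat \<Rightarrow> real^'n)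
    \<Rightarrow> nat set \<Rightarrow> (nat \<Rightarrow> real^'n) \<Rightarrow> nat \<Rightarrow> real^'n" where
  "disc_lap d dw h V x \<Lambda> \<phi> i =
     2 *\<^sub>R (\<Sum>j\<in>\<Lambda> - {i}. (V j / norm (x i - x j)
        * (((x i - x j) /\<^sub>R norm (x i - x j)) \<bullet> grad_wh d dw h (x i) (x j))) *\<^sub>R (\<phi> i - \<phi> j))"

end

theory Submission
  imports Defs "HOL-Analysis.Analysis"
begin

lemma aux: fixes d :: "'a::real_inner"
  assumes "d \<noteq> 0" shows "(d /\<^sub>R norm d) \<bullet> ((w / norm d) *\<^sub>R d) = w"
proof -
  have nz: "norm d \<noteq> 0" using assms by simp
  have "(d /\<^sub>R norm d) \<bullet> ((w / norm d) *\<^sub>R d) = w / (norm d * norm d) * (d \<bullet> d)"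
    by (simp add: inner_scaleR_left inner_scaleR_right divide_inverse)
  also have "d \<bullet> d = norm d * norm d" by (simp add: power2_eq_square[symmetric] power2_norm_eq_inner)
  finally show ?thesis using nz by simp
qed

lemma four_aux: "(\<nu>::real) > 0 \<Longrightarrow> (t::real) > 0 \<Longrightarrow> 4 * (d / (2 * \<nu> * t)) = 2 * d / (t * \<nu>)"
  by (simp add: divide_simps)

lemma weighted_CS:
  fixes a c :: "nat \<Rightarrow> real"
  assumes "\<And>j. j \<in> I \<Longrightarrow> a j \<ge> 0"
  shows "(\<Sum>j\<in>I. a j * c j)\<^sup>2 \<le> (\<Sum>j\<in>I. a j) * (\<Sum>j\<in>I. a j * (c j)\<^sup>2)"
proof -
  have "(\<Sum>j\<in>I. a j * c j) = (\<Sum>j\<in>I. sqrt (a j) * (sqrt (a j) * c j))"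
    by (rule sum.cong) (use assms in \<open>auto simp: real_sqrt_mult_self mult.assoc[symmetric]\<close>)
  moreover have "(\<Sum>j\<in>I. a j) = (\<Sum>j\<in>I. (sqrt (a j))\<^sup>2)"
    by (rule sum.cong) (use assms in auto)
  moreover have "(\<Sum>j\<in>I. a j * (c j)\<^sup>2) = (\<Sum>j\<in>I. (sqrt (a j) * c j)\<^sup>2)"
    by (rule sum.cong) (use assms in \<open>auto simp: power_mult_distrib\<close>)
  ultimately show ?thesis using Cauchy_Schwarz_ineq_sum[of "\<lambda>j. sqrt (a j)" "\<lambda>j. sqrt (a j) * c j" I]
    by simp
qed

theorem lemma5:
  fixes w dw ddw :: "real \<Rightarrow> real" and r0 h \<nu> \<Delta>t \<delta> :: real
    and N :: nat and V :: "nat \<Rightarrow> real" and x :: "nat \<Rightarrow> real^'n"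
    and \<Lambda> :: "nat set" and \<phi> :: "nat \<Rightarrow> real^'n"
  assumes dim: "CARD('n) = 2 \<or> CARD('n) = 3"
    and w_d1: "\<And>r. r \<ge> 0 \<Longrightarrow> (w has_real_derivative dw r) (at r within {0..})"
    and w_d2: "\<And>r. r \<ge> 0 \<Longrightarrow> (dw has_real_derivative ddw r) (at r within {0..})"
    and w_C2: "continuous_on {0..} ddw"
    and r0: "r0 > 0"
    and w_pos: "\<And>r. 0 < r \<Longrightarrow> r < r0 \<Longrightarrow> w r > 0"
    and w_zero: "\<And>r. r \<ge> r0 \<Longrightarrow> w r = 0"
    and dw_neg: "\<And>r. 0 < r \<Longrightarrow> r < r0 \<Longrightarrow> dw r < 0"
    and dw_0: "dw 0 = 0"
    and dw_zero: "\<And>r. r \<ge> r0 \<Longrightarrow> dw r = 0"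
    and w_int: "((\<lambda>y::real^'n. w (norm y)) has_integral 1) UNIV"
    and h: "h > 0"
    and V: "\<And>i. i \<in> {1..N} \<Longrightarrow> V i > 0"
    and x_inj: "inj_on x {1..N}"
    and \<nu>: "\<nu> > 0" and \<Delta>t: "\<Delta>t > 0" and \<delta>: "0 < \<delta>" "\<delta> < 1"
    and step: "\<forall>i\<in>{1..N}. 2 * \<nu> * \<Delta>t *
       (\<Sum>j\<in>{1..N} - {i}. V j * \<bar>wh_deriv CARD('n) dw h (norm (x i - x j))\<bar> / norm (x i - x j))
       \<le> \<delta>"
    and \<Lambda>: "\<Lambda> \<subseteq> {1..N}"
  shows "disc_L2_sq V \<Lambda> (disc_lap CARD('n) dw h V x \<Lambda> \<phi>)
    \<le> 2 * \<delta> / (\<Delta>t * \<nu>) * disc_H1_sq CARD('n) dw h V x \<Lambda> \<phi>"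
proof -
  define D where "D = CARD('n)"
  define r where "r = (\<lambda>i j. norm (x i - x j))"
  define a where "a = (\<lambda>i j. V j * \<bar>wh_deriv D dw h (r i j)\<bar> / r i j)"
  define L where "L = disc_lap D dw h V x \<Lambda> \<phi>"
  have fin: "finite \<Lambda>" using \<Lambda> finite_subset by blast
  have Vpos: "\<And>j. j \<in> \<Lambda> \<Longrightarrow> V j > 0" using V \<Lambda> by auto
  have anonneg: "\<And>i j. j \<in> \<Lambda> \<Longrightarrow> a i j \<ge> 0"
    unfolding a_def by (intro divide_nonneg_nonneg mult_nonneg_nonneg) (auto simp: less_imp_le Vpos r_def)
  have coef: "\<bar>V j / norm (x i - x j) * (((x i - x j) /\<^sub>R norm (x i - x j)) \<bullet> grad_wh D dw h (x i) (x j))\<bar> = a i j"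
    if "j \<in> \<Lambda>" for i j
  proof (cases "r i j = 0")
    case True then show ?thesis unfolding a_def r_def by simp
  next
    case False
    have eq: "((x i - x j) /\<^sub>R norm (x i - x j)) \<bullet> grad_wh D dw h (x i) (x j)
        = wh_deriv D dw h (r i j)"
      unfolding grad_wh_def r_def using False aux[of "x i - x j"] by (simp add: r_def)
    show ?thesis unfolding eq a_def using Vpos[OF that]
      by (simp add: r_def abs_mult abs_divide)
  qed
  have A: "(\<Sum>j\<in>\<Lambda> - {i}. a i j) \<le> \<delta> / (2 * \<nu> * \<Delta>t)" if i: "i \<in> \<Lambda>" for i
  proof -
    have "(\<Sum>j\<in>\<Lambda> - {i}. a i j) \<le> (\<Sum>j\<in>{1..N} - {i}. a i j)"
    proof (rule sum_mono2)
      show "finite ({1..N} - {i})" by simp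
      show "\<Lambda> - {i} \<subseteq> {1..N} - {i}" using \<Lambda> by blast
      fix b assume b: "b \<in> {1..N} - {i} - (\<Lambda> - {i})"
      then have "V b > 0" using V by blast
      then show "0 \<le> a i b" unfolding a_def
        by (intro divide_nonneg_nonneg mult_nonneg_nonneg) (auto simp: r_def)
    qed
    also have "\<dots> = (\<Sum>j\<in>{1..N} - {i}. V j * \<bar>wh_deriv CARD('n) dw h (norm (x i - x j))\<bar> / norm (x i - x j))"
      by (simp add: a_def r_def D_def)
    finally have le1: "(\<Sum>j\<in>\<Lambda> - {i}. a i j) \<le> (\<Sum>j\<in>{1..N} - {i}. V j * \<bar>wh_deriv CARD('n) dw h (norm (x i - x j))\<bar> / norm (x i - x j))" .
    have c0: "0 < 2 * \<nu> * \<Delta>t" using \<nu> \<Delta>t by simp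
    have "2 * \<nu> * \<Delta>t * (\<Sum>j\<in>\<Lambda> - {i}. a i j) \<le> 2 * \<nu> * \<Delta>t * (\<Sum>j\<in>{1..N} - {i}. V j * \<bar>wh_deriv CARD('n) dw h (norm (x i - x j))\<bar> / norm (x i - x j))"
      using mult_left_mono[OF le1 less_imp_le[OF c0]] .
    also have "\<dots> \<le> \<delta>"
    proof -
      have iN: "i \<in> {1..N}" using i \<Lambda> by (rule subsetD[rotated])
      show ?thesis by (rule bspec[OF step iN])
    qed
    finally have "(2 * \<nu> * \<Delta>t) * (\<Sum>j\<in>\<Lambda> - {i}. a i j) \<le> \<delta>" .
    then show ?thesis using c0 by (simp add: pos_le_divide_eq mult.commute)
  qed
  have pt: "V i * (norm (L i))\<^sup>2 \<le> 2 * \<delta> / (\<Delta>t * \<nu>) *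
      (V i * (\<Sum>j\<in>\<Lambda> - {i}. V j * (norm (\<phi> i - \<phi> j))\<^sup>2 / norm (x i - x j)
        * \<bar>wh_deriv D dw h (norm (x i - x j))\<bar>))" if i: "i \<in> \<Lambda>" for i
  proof -
    have n1: "norm (L i) \<le> 2 * (\<Sum>j\<in>\<Lambda> - {i}. a i j * norm (\<phi> i - \<phi> j))"
    proof -
      have "norm (L i) = 2 * norm (\<Sum>j\<in>\<Lambda> - {i}. (V j / norm (x i - x j)
        * (((x i - x j) /\<^sub>R norm (x i - x j)) \<bullet> grad_wh D dw h (x i) (x j))) *\<^sub>R (\<phi> i - \<phi> j))"
        unfolding L_def disc_lap_def by simp
      also have "\<dots> \<le> 2 * (\<Sum>j\<in>\<Lambda> - {i}. norm ((V j / norm (x i - x j)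
        * (((x i - x j) /\<^sub>R norm (x i - x j)) \<bullet> grad_wh D dw h (x i) (x j))) *\<^sub>R (\<phi> i - \<phi> j)))"
        by (rule mult_left_mono[OF norm_sum]) simp
      also have "\<dots> = 2 * (\<Sum>j\<in>\<Lambda> - {i}. a i j * norm (\<phi> i - \<phi> j))"
      proof -
        have nj: "norm ((V j / norm (x i - x j)
          * (((x i - x j) /\<^sub>R norm (x i - x j)) \<bullet> grad_wh D dw h (x i) (x j))) *\<^sub>R (\<phi> i - \<phi> j))
          = a i j * norm (\<phi> i - \<phi> j)" if "j \<in> \<Lambda> - {i}" for j
          unfolding norm_scaleR coef[of j i, OF DiffD1[OF that]] ..
        show ?thesis by (rule arg_cong[where f="\<lambda>s. 2 * s"], rule sum.cong[OF refl], rule nj)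
      qed
      finally show ?thesis .
    qed
    have s0: "0 \<le> (\<Sum>j\<in>\<Lambda> - {i}. a i j * norm (\<phi> i - \<phi> j))"
      by (rule sum_nonneg) (simp add: anonneg)
    have "(norm (L i))\<^sup>2 \<le> (2 * (\<Sum>j\<in>\<Lambda> - {i}. a i j * norm (\<phi> i - \<phi> j)))\<^sup>2"
      by (rule power_mono[OF n1]) simp
    also have "\<dots> = 4 * (\<Sum>j\<in>\<Lambda> - {i}. a i j * norm (\<phi> i - \<phi> j))\<^sup>2"
      by (simp only: power_mult_distrib) simp
    also have "\<dots> \<le> 4 * ((\<Sum>j\<in>\<Lambda> - {i}. a i j) * (\<Sum>j\<in>\<Lambda> - {i}. a i j * (norm (\<phi> i - \<phi> j))\<^sup>2))"
    proof -
      have "(\<Sum>j\<in>\<Lambda> - {i}. a i j * norm (\<phi> i - \<phi> j))\<^sup>2 \<le> (\<Sum>j\<in>\<Lambda> - {i}. a i j) * (\<Sum>j\<in>\<Lambda> - {i}. a i j * (norm (\<phi> i - \<phi> j))\<^sup>2)"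
        by (rule weighted_CS[of "\<Lambda> - {i}" "a i" "\<lambda>j. norm (\<phi> i - \<phi> j)"]) (simp add: anonneg)
      then show ?thesis by (rule mult_left_mono) simp
    qed
    also have "\<dots> \<le> 4 * (\<delta> / (2 * \<nu> * \<Delta>t) * (\<Sum>j\<in>\<Lambda> - {i}. a i j * (norm (\<phi> i - \<phi> j))\<^sup>2))"
    proof -
      have "0 \<le> (\<Sum>j\<in>\<Lambda> - {i}. a i j * (norm (\<phi> i - \<phi> j))\<^sup>2)"
        by (rule sum_nonneg) (simp add: anonneg)
      then have "(\<Sum>j\<in>\<Lambda> - {i}. a i j) * (\<Sum>j\<in>\<Lambda> - {i}. a i j * (norm (\<phi> i - \<phi> j))\<^sup>2)
         \<le> \<delta> / (2 * \<nu> * \<Delta>t) * (\<Sum>j\<in>\<Lambda> - {i}. a i j * (norm (\<phi> i - \<phi> j))\<^sup>2)"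
        by (rule mult_right_mono[OF A[OF i]])
      then show ?thesis by (rule mult_left_mono) simp
    qed
    also have "\<dots> = 2 * \<delta> / (\<Delta>t * \<nu>) * (\<Sum>j\<in>\<Lambda> - {i}. V j * (norm (\<phi> i - \<phi> j))\<^sup>2 / norm (x i - x j)
        * \<bar>wh_deriv D dw h (norm (x i - x j))\<bar>)"
    proof -
      have e1: "(\<Sum>j\<in>\<Lambda> - {i}. a i j * (norm (\<phi> i - \<phi> j))\<^sup>2) = (\<Sum>j\<in>\<Lambda> - {i}. V j * (norm (\<phi> i - \<phi> j))\<^sup>2 / norm (x i - x j)
        * \<bar>wh_deriv D dw h (norm (x i - x j))\<bar>)"
        by (rule sum.cong[OF refl]) (simp add: a_def r_def)
      have e2: "4 * (\<delta> / (2 * \<nu> * \<Delta>t)) = 2 * \<delta> / (\<Delta>t * \<nu>)"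
        using \<nu> \<Delta>t by (rule four_aux)
      have "4 * (\<delta> / (2 * \<nu> * \<Delta>t) * (\<Sum>j\<in>\<Lambda> - {i}. a i j * (norm (\<phi> i - \<phi> j))\<^sup>2))
         = (4 * (\<delta> / (2 * \<nu> * \<Delta>t))) * (\<Sum>j\<in>\<Lambda> - {i}. a i j * (norm (\<phi> i - \<phi> j))\<^sup>2)"
        by (rule mult.assoc[symmetric])
      then show ?thesis by (simp only: e1 e2)
    qed
    finally have fin1: "(norm (L i))\<^sup>2 \<le> 2 * \<delta> / (\<Delta>t * \<nu>) * (\<Sum>j\<in>\<Lambda> - {i}. V j * (norm (\<phi> i - \<phi> j))\<^sup>2 / norm (x i - x j)
        * \<bar>wh_deriv D dw h (norm (x i - x j))\<bar>)" .
    have "V i * (norm (L i))\<^sup>2 \<le> V i * (2 * \<delta> / (\<Delta>t * \<nu>) * (\<Sum>j\<in>\<Lambda> - {i}. V j * (norm (\<phi> i - \<phi> j))\<^sup>2 / norm (x i - x j)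
        * \<bar>wh_deriv D dw h (norm (x i - x j))\<bar>))"
      by (rule mult_left_mono[OF fin1]) (simp add: less_imp_le[OF Vpos[OF i]])
    then show ?thesis by (simp only: mult.left_commute)
  qed
  have "disc_L2_sq V \<Lambda> L \<le> (\<Sum>i\<in>\<Lambda>. 2 * \<delta> / (\<Delta>t * \<nu>) *
      (V i * (\<Sum>j\<in>\<Lambda> - {i}. V j * (norm (\<phi> i - \<phi> j))\<^sup>2 / norm (x i - x j)
        * \<bar>wh_deriv D dw h (norm (x i - x j))\<bar>)))"
    unfolding disc_L2_sq_def by (rule sum_mono) (rule pt)
  also have "\<dots> = 2 * \<delta> / (\<Delta>t * \<nu>) * disc_H1_sq D dw h V x \<Lambda> \<phi>"
    unfolding disc_H1_sq_def by (simp add: sum_distrib_left)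
  finally show ?thesis unfolding L_def D_def .
qed

end
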